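(* Let $m_1 > m_2 \ge 2$ be integers and let $G_j$ be a first kind of ideal center graph (defined in the context) with center vertex $v_j$, consisting of a clique $K$ of size $m_1$ and a clique $K'$ of size $m_2$ with $K \cap K' = \{v_j\}$ and no edges between $K\setminus\{v_j\}$ and $K'\setminus\{v_j\}$, so that $K$ is the (unique) maximum clique of $G_j$. Let $A$ be the adjacency matrix of $G_j$, $\lambda_1$ its largest eigenvalue with eigenvector $|\lambda_1\rangle$, and for a vertex $v_l$ let $p_{l,1} = \langle l|\lambda_1\rangle\langle\lambda_1|j\rangle$. If $v_l$ is a member of the maximum clique $K$ and $v_k$ is not a member of the maximum clique, then \[ p_{l,1} > p_{k,1}, \] i.e. (for $v_l \neq v_j$) $\left|\frac{1}{m_1-2-\lambda_1}\right| > \left|\frac{1}{m_2-2-\lambda_1}\right|$.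
   Context: A graph $G_j$ is a center graph with center vertex $v_j$ if $v_j$ is adjacent to all other vertices. A first kind of ideal center graph is a center graph $G_j$ whose vertex set is the union of two cliques, both containing the center vertex $v_j$, such that no edge joins a vertex of one clique (other than $v_j$) to a vertex of the other clique; $m_1$ denotes the size of the larger (maximum) clique and $m_2$ the size of the other clique. The continuous time quantum walk on a graph with adjacency matrix $A$ (vertices $v_1,\dots,v_N$ identified with an orthonormal basis $|1\rangle,\dots,|N\rangle$) has transition amplitude $\alpha_{l,j}(t) = \langle l|e^{iAt}|j\rangle = \sum_n e^{i\lambda_n t}\langle l|\lambda_n\rangle\langle\lambda_n|j\rangle$, where $\lambda_1\ge\lambda_2\ge\dots\ge\lambda_N$ are the eigenvalues of $A$ with orthonormal eigenvectors $|\lambda_n\rangle$; $p_{l,n} = \langle l|\lambda_n\rangle\langle\lambda_n|j\rangle$ is the intensity (coefficient) of the frequency $\lambda_n$ in $\alpha_{l,j}$. *)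

theory Defs
  imports "HOL-Analysis.Analysis"
begin

definition simple_graph :: "('n \<Rightarrow> 'n \<Rightarrow> bool) \<Rightarrow> bool" where
  "simple_graph E \<longleftrightarrow> (\<forall>x y. E x y \<longrightarrow> E y x) \<and> (\<forall>x. \<not> E x x)"

definition adj_matrix :: "('n::finite \<Rightarrow> 'n \<Rightarrow> bool) \<Rightarrow> real^'n^'n" where
  "adj_matrix E = (\<chi> i k. if E i k then 1 else 0)"

definition is_clique :: "('n \<Rightarrow> 'n \<Rightarrow> bool) \<Rightarrow> 'n set \<Rightarrow> bool" where
  "is_clique E S \<longleftrightarrow> (\<forall>x\<in>S. \<forall>y\<in>S. x \<noteq> y \<longrightarrow> E x y)"

definition center_graph :: "('n \<Rightarrow> 'n \<Rightarrow> bool) \<Rightarrow> 'n \<Rightarrow> bool" where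
  "center_graph E j \<longleftrightarrow> (\<forall>x. x \<noteq> j \<longrightarrow> E j x)"

definition first_kind_ideal_center_graph ::
  "('n \<Rightarrow> 'n \<Rightarrow> bool) \<Rightarrow> 'n \<Rightarrow> 'n set \<Rightarrow> 'n set \<Rightarrow> bool" where
  "first_kind_ideal_center_graph E j K K' \<longleftrightarrow>
     simple_graph E \<and> center_graph E j \<and>
     is_clique E K \<and> is_clique E K' \<and> j \<in> K \<and> j \<in> K' \<and>
     K \<union> K' = UNIV \<and> K \<inter> K' = {j} \<and>
     (\<forall>x\<in>K - {j}. \<forall>y\<in>K' - {j}. \<not> E x y)"

definition is_eigenvalue :: "real^'n^'n \<Rightarrow> real \<Rightarrow> bool" where
  "is_eigenvalue A \<mu> \<longleftrightarrow> (\<exists>x. x \<noteq> 0 \<and> A *v x = \<mu> *\<^sub>R x)"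

end

theory Submission
  imports Defs
begin

lemma E_char:
  assumes G: "first_kind_ideal_center_graph E j K K'"
  shows "E x y \<longleftrightarrow> x \<noteq> y \<and> ((x\<in>K \<and> y\<in>K) \<or> (x\<in>K' \<and> y\<in>K'))"
proof -
  from G have s: "simple_graph E" and c1: "is_clique E K" and c2: "is_clique E K'"
    and U: "K \<union> K' = UNIV" and I: "K \<inter> K' = {j}"
    and N: "\<forall>x\<in>K - {j}. \<forall>y\<in>K' - {j}. \<not> E x y"
    unfolding first_kind_ideal_center_graph_def by auto
  show ?thesis
  proof
    assume e: "E x y"
    have "x \<noteq> y" using s e unfolding simple_graph_def by auto
    moreover have "(x\<in>K \<and> y\<in>K) \<or> (x\<in>K' \<and> y\<in>K')"
    proof (rule ccontr)
      assume h: "\<not> ?thesis"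
      have ey: "E y x" using s e unfolding simple_graph_def by auto
      from h U I have "(x \<in> K - {j} \<and> y \<in> K' - {j}) \<or> (y \<in> K - {j} \<and> x \<in> K' - {j})"
        by blast
      then show False using N e ey by blast
    qed
    ultimately show "x \<noteq> y \<and> ((x\<in>K \<and> y\<in>K) \<or> (x\<in>K' \<and> y\<in>K'))" by blast
  next
    assume "x \<noteq> y \<and> ((x\<in>K \<and> y\<in>K) \<or> (x\<in>K' \<and> y\<in>K'))"
    then show "E x y" using c1 c2 unfolding is_clique_def by blast
  qed
qed

lemma mult_row:
  fixes E :: "'n::finite \<Rightarrow> 'n \<Rightarrow> bool"
  shows "(adj_matrix E *v w) $ i = sum (\<lambda>y. w $ y) {y. E i y}"
proof -
  have "(adj_matrix E *v w) $ i = (\<Sum>y\<in>UNIV. if E i y then w $ y else 0)"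
    unfolding adj_matrix_def matrix_vector_mult_def by (simp, intro sum.cong) auto
  also have "\<dots> = sum (\<lambda>y. w $ y) {y\<in>UNIV. E i y}"
    by (rule sum.inter_filter[symmetric]) simp
  finally show ?thesis by simp
qed

lemma mult_K:
  fixes E :: "'n::finite \<Rightarrow> 'n \<Rightarrow> bool"
  assumes G: "first_kind_ideal_center_graph E j K K'" and i: "i \<in> K - {j}"
  shows "(adj_matrix E *v w) $ i = sum (\<lambda>y. w $ y) K - w $ i"
proof -
  from G have I: "K \<inter> K' = {j}" unfolding first_kind_ideal_center_graph_def by auto
  have "{y. E i y} = K - {i}" using E_char[OF G] i I by auto
  then show ?thesis using mult_row[of E w i] i by (simp add: sum_diff1)
qed

lemma mult_K':
  fixes E :: "'n::finite \<Rightarrow> 'n \<Rightarrow> bool"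
  assumes G: "first_kind_ideal_center_graph E j K K'" and i: "i \<in> K' - {j}"
  shows "(adj_matrix E *v w) $ i = sum (\<lambda>y. w $ y) K' - w $ i"
proof -
  from G have I: "K \<inter> K' = {j}" unfolding first_kind_ideal_center_graph_def by auto
  have "{y. E i y} = K' - {i}" using E_char[OF G] i I by auto
  then show ?thesis using mult_row[of E w i] i by (simp add: sum_diff1)
qed

lemma mult_j:
  fixes E :: "'n::finite \<Rightarrow> 'n \<Rightarrow> bool"
  assumes G: "first_kind_ideal_center_graph E j K K'"
  shows "(adj_matrix E *v w) $ j = sum (\<lambda>y. w $ y) K + sum (\<lambda>y. w $ y) K' - 2 * w $ j"
proof -
  from G have I: "K \<inter> K' = {j}" and U: "K \<union> K' = UNIV" and jK: "j \<in> K" and jK': "j \<in> K'"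
    unfolding first_kind_ideal_center_graph_def by auto
  have "{y. E j y} = (K - {j}) \<union> (K' - {j})" using E_char[OF G] I U by auto
  then have "(adj_matrix E *v w) $ j = sum (\<lambda>y. w $ y) (K - {j}) + sum (\<lambda>y. w $ y) (K' - {j})"
    using mult_row[of E w j] I by (simp add: sum.union_disjoint Diff_Int_distrib2 Int_Diff Diff_Int_distrib, subst sum.union_disjoint, auto)
  then show ?thesis using jK jK' by (simp add: sum_diff1)
qed


theorem theorem1:
  fixes E :: "'n::finite \<Rightarrow> 'n \<Rightarrow> bool"
    and j l k :: 'n and K K' :: "'n set" and m1 m2 :: nat
    and lam1 :: real and v :: "real^'n"
  assumes G: "first_kind_ideal_center_graph E j K K'"
    and cK: "card K = m1" and cK': "card K' = m2"
    and m: "m1 > m2" "m2 \<ge> 2"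
    and ev: "is_eigenvalue (adj_matrix E) lam1"
    and largest: "\<forall>\<mu>. is_eigenvalue (adj_matrix E) \<mu> \<longrightarrow> \<mu> \<le> lam1"
    and vec: "adj_matrix E *v v = lam1 *\<^sub>R v" and unit: "norm v = 1"
    and l: "l \<in> K" and k: "k \<notin> K"
  shows "v $ l * v $ j > v $ k * v $ j"
proof -
  from G have I: "K \<inter> K' = {j}" and U: "K \<union> K' = UNIV" and jK: "j \<in> K" and jK': "j \<in> K'"
    unfolding first_kind_ideal_center_graph_def by auto
  define a where "a = real m1"
  define b where "b = real m2"
  have ab: "a > b" "b \<ge> 2" using m by (auto simp: a_def b_def)
  have cKj: "card (K - {j}) = m1 - 1" using cK jK by simp
  have cK'j: "card (K' - {j}) = m2 - 1" using cK' jK' by simp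
  have rKj: "real (card (K - {j})) = a - 1" using cKj m by (simp add: a_def of_nat_diff)
  have rK'j: "real (card (K' - {j})) = b - 1" using cK'j m by (simp add: b_def of_nat_diff)
  have sumK: "sum f K = f j + sum f (K - {j})" for f :: "'n \<Rightarrow> real"
    using jK by (simp add: sum.remove)
  have sumK': "sum f K' = f j + sum f (K' - {j})" for f :: "'n \<Rightarrow> real"
    using jK' by (simp add: sum.remove)
  define p where "p = (\<lambda>r::real. r*(r-a+2)*(r-b+2) - (a-1)*(r-b+2) - (b-1)*(r-a+2))"
  have p1: "p (a-2) \<le> 0"
  proof -
    have "(a-1)*(a-b) \<ge> 0" using ab by (intro mult_nonneg_nonneg) auto
    then show ?thesis unfolding p_def by (simp add: algebra_simps)
  qed
  have p2: "0 \<le> p (a+b)"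
  proof -
    have "(a+b)*(b+2)*(a+2) \<ge> (a+b)*(a+2)"
      using ab by (simp add: mult_le_cancel_left1 mult_right_mono)
    moreover have "(a+b)*(a+2) \<ge> (a-1)*(a+2) + (b-1)*(b+2)"
      using ab by (simp add: algebra_simps) (smt (verit) mult_left_mono mult_right_mono)
    ultimately show ?thesis unfolding p_def by (simp add: algebra_simps)
  qed
  have "\<exists>r. a-2 \<le> r \<and> r \<le> a+b \<and> p r = 0"
    by (rule IVT[of p "a-2" 0 "a+b", OF p1 p2]) (use ab in \<open>auto simp: p_def intro!: continuous_intros\<close>)
  then obtain r where r: "a - 2 \<le> r" "p r = 0" by blast
  have rne: "r \<noteq> a - 2"
  proof
    assume "r = a - 2"
    with r(2) have "(a-1)*(a-b) = 0" unfolding p_def by (simp add: algebra_simps)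
    with ab show False by simp
  qed
  define tt where "tt = r - a + 2"
  define ss where "ss = r - b + 2"
  have tpos: "tt > 0" using r(1) rne unfolding tt_def by simp
  have spos: "ss > 0" using tpos ab unfolding tt_def ss_def by simp
  have pr: "r * tt * ss = (a-1)* ss + (b-1)*tt" using r(2) unfolding p_def tt_def ss_def by simp
  define w :: "real^'n" where "w = (\<chi> i. if i = j then 1 else if i \<in> K then 1/tt else 1/ss)"
  have wK: "sum (\<lambda>y. w $ y) K = 1 + (a-1)/tt"
  proof -
    have "sum (\<lambda>y. w $ y) (K - {j}) = sum (\<lambda>y. 1/tt) (K - {j})"
      by (rule sum.cong) (auto simp: w_def)
    then show ?thesis using sumK[of "\<lambda>y. w $ y"] rKj by (simp add: w_def)
  qed
  have wK': "sum (\<lambda>y. w $ y) K' = 1 + (b-1)/ss"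
  proof -
    have "sum (\<lambda>y. w $ y) (K' - {j}) = sum (\<lambda>y. 1/ss) (K' - {j})"
      by (rule sum.cong) (use I in \<open>auto simp: w_def\<close>)
    then show ?thesis using sumK'[of "\<lambda>y. w $ y"] rK'j by (simp add: w_def)
  qed
  have "adj_matrix E *v w = r *\<^sub>R w"
  proof (rule vec_eq_iff[THEN iffD2], intro allI)
    fix i
    consider "i = j" | "i \<in> K - {j}" | "i \<in> K' - {j}" using U by blast
    then show "(adj_matrix E *v w) $ i = (r *\<^sub>R w) $ i"
    proof cases
      case 1
      have "(a-1)/tt + (b-1)/ss = r" using pr tpos spos by (simp add: field_simps)
      then show ?thesis using 1 mult_j[OF G, of w] wK wK' by (simp add: w_def)
    next
      case 2
      then show ?thesis using mult_K[OF G 2, of w] wK tpos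
        by (simp add: w_def tt_def field_simps)
    next
      case 3
      then have "i \<notin> K" using I by blast
      then show ?thesis using 3 mult_K'[OF G 3, of w] wK' spos
        by (simp add: w_def ss_def field_simps)
    qed
  qed
  moreover have "w \<noteq> 0" by (simp add: vec_eq_iff w_def) (auto)
  ultimately have "is_eigenvalue (adj_matrix E) r" unfolding is_eigenvalue_def by blast
  with largest have rl: "r \<le> lam1" by blast
  define T where "T = lam1 - a + 2"
  define S where "S = lam1 - b + 2"
  have Tpos: "T > 0" using rl tpos unfolding T_def tt_def by simp
  have TS: "T < S" using ab unfolding T_def S_def by simp
  have ab1: "a \<ge> b + 1" using m unfolding a_def b_def by simp
  have S1: "S > 1" using ab1 Tpos unfolding T_def S_def by simp
  define z where "z = v $ j"
  define x where "x = sum (\<lambda>y. v $ y) K / (lam1 + 1)"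
  define yy where "yy = sum (\<lambda>y. v $ y) K' / (lam1 + 1)"
  have lp1: "lam1 + 1 > 0" using Tpos ab unfolding T_def by simp
  have vx: "v $ i = x" if "i \<in> K - {j}" for i
  proof -
    have "(adj_matrix E *v v) $ i = lam1 * v $ i" using vec by simp
    then have "lam1 * v $ i = sum (\<lambda>y. v $ y) K - v $ i"
      using mult_K[OF G that, of v] by simp
    then have "(lam1 + 1) * v $ i = sum (\<lambda>y. v $ y) K" by (simp add: algebra_simps)
    then show ?thesis unfolding x_def using lp1 by (simp add: field_simps)
  qed
  have vy: "v $ i = yy" if "i \<in> K' - {j}" for i
  proof -
    have "(adj_matrix E *v v) $ i = lam1 * v $ i" using vec by simp
    then have "lam1 * v $ i = sum (\<lambda>y. v $ y) K' - v $ i"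
      using mult_K'[OF G that, of v] by simp
    then have "(lam1 + 1) * v $ i = sum (\<lambda>y. v $ y) K'" by (simp add: algebra_simps)
    then show ?thesis unfolding yy_def using lp1 by (simp add: field_simps)
  qed
  have SKv: "sum (\<lambda>y. v $ y) K = z + (a-1)*x"
  proof -
    have "sum (\<lambda>y. v $ y) (K - {j}) = sum (\<lambda>y. x) (K - {j})"
      by (rule sum.cong) (auto simp: vx)
    moreover have "sum (\<lambda>u. x) (K - {j}) = (a-1) * x" using rKj by simp
    ultimately show ?thesis using sumK[of "\<lambda>y. v $ y"] unfolding z_def by linarith
  qed
  have SK'v: "sum (\<lambda>y. v $ y) K' = z + (b-1)*yy"
  proof -
    have "sum (\<lambda>y. v $ y) (K' - {j}) = sum (\<lambda>u. yy) (K' - {j})"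
      by (rule sum.cong) (auto simp: vy)
    moreover have "sum (\<lambda>u. yy) (K' - {j}) = (b-1) * yy" using rK'j by simp
    ultimately show ?thesis using sumK'[of "\<lambda>y. v $ y"] unfolding z_def by linarith
  qed
  have "(lam1 + 1) * x = sum (\<lambda>y. v $ y) K" unfolding x_def using lp1 by simp
  then have "(lam1 + 1) * x = z + (a-1)*x" using SKv by linarith
  moreover have "T * x = (lam1+1)*x - (a-1)*x" unfolding T_def by (simp add: algebra_simps)
  ultimately have "T * x = z" by linarith
  then have xz: "x = z / T" using Tpos by (simp add: eq_divide_eq mult.commute)
  have "(lam1 + 1) * yy = sum (\<lambda>y. v $ y) K'" unfolding yy_def using lp1 by simp
  then have "(lam1 + 1) * yy = z + (b-1)*yy" using SK'v by linarith
  moreover have "S * yy = (lam1+1)*yy - (b-1)*yy" unfolding S_def by (simp add: algebra_simps)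
  ultimately have "S * yy = z" by linarith
  then have yz: "yy = z / S" using S1 by (simp add: eq_divide_eq mult.commute)
  have zne: "z \<noteq> 0"
  proof
    assume z0: "z = 0"
    have "v = 0"
    proof (rule vec_eq_iff[THEN iffD2], intro allI)
      fix i
      consider "i = j" | "i \<in> K - {j}" | "i \<in> K' - {j}" using U by blast
      then show "v $ i = 0 $ i"
        by cases (use z0 xz yz vx vy z_def in auto)
    qed
    with unit show False by simp
  qed
  have kK': "k \<in> K' - {j}" using k U jK by blast
  have vk: "v $ k = z / S" using vy[OF kK'] yz by simp
  have zz: "z * z > 0" using zne by (auto simp: zero_less_mult_iff linorder_neq_iff)
  show ?thesis
  proof (cases "l = j")
    case True
    have "z * z / S < z * z" using zz S1 using mult_strict_left_mono[of 1 S "z*z"] by (simp add: divide_less_eq)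
    then show ?thesis using True vk by (simp add: z_def)
  next
    case False
    then have "v $ l = z / T" using vx l xz by simp
    moreover have "z * z / S < z * z / T" using zz Tpos TS by (simp add: divide_strict_left_mono)
    ultimately show ?thesis using vk by (simp add: z_def)
  qed
qed

end
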